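(* Let $W$ be a graphon on a probability space $J=(\Omega,\mathcal A,\mu)$ and let $(\nu_x)_{x\in J}$, $\nu_x=W(x,\cdot)\,d\mu$, be the associated graphop. Then: every graphon automorphism of $W$ is a graphop automorphism of $(\nu_x)$; a graphop automorphism $\varphi$ of $(\nu_x)$ is a graphon automorphism of $W$ if and only if it preserves $\mu$; in particular, the graphon-induced symmetries are exactly the graphop-induced symmetries that are isometries of $L^1(J)$.
   Context: A graphon is a symmetric measurable $W:\Omega\times\Omega\to[0,1]$. A graphon automorphism is an invertible measure preserving $\varphi:J\to J$ with $W(\varphi(x),\varphi(y))=W(x,y)$ for every $x$ and almost every $y$. A graphop automorphism of a graphop with fiber measures $(\nu_x)$ is a measurable bijection $\varphi$ with $\varphi\#\nu_x=\nu_{\varphi(x)}$ for every $x$. The graphon-induced (resp. graphop-induced) symmetry associated to a graphon (resp. graphop) automorphism $\varphi$ is the map $\varphi^*:L^1(J)\to L^1(J)$, $u\mapsto u\circ\varphi$. *)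

theory Defs
  imports "HOL-Probability.Probability"
begin

definition graphon :: "'a measure \<Rightarrow> ('a \<Rightarrow> 'a \<Rightarrow> real) \<Rightarrow> bool" where
  "graphon M W \<longleftrightarrow> prob_space M \<and>
     (\<lambda>(x, y). W x y) \<in> borel_measurable (M \<Otimes>\<^sub>M M) \<and>
     (\<forall>x\<in>space M. \<forall>y\<in>space M. W x y = W y x \<and> 0 \<le> W x y \<and> W x y \<le> 1)"

definition graphop_of :: "'a measure \<Rightarrow> ('a \<Rightarrow> 'a \<Rightarrow> real) \<Rightarrow> 'a \<Rightarrow> 'a measure" where
  "graphop_of M W x = density M (\<lambda>y. ennreal (W x y))"

definition invertible_measure_preserving :: "'a measure \<Rightarrow> ('a \<Rightarrow> 'a) \<Rightarrow> bool" where
  "invertible_measure_preserving M \<phi> \<longleftrightarrow>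
     bij_betw \<phi> (space M) (space M) \<and> \<phi> \<in> M \<rightarrow>\<^sub>M M \<and>
     the_inv_into (space M) \<phi> \<in> M \<rightarrow>\<^sub>M M \<and> distr M M \<phi> = M"

definition graphon_aut :: "'a measure \<Rightarrow> ('a \<Rightarrow> 'a \<Rightarrow> real) \<Rightarrow> ('a \<Rightarrow> 'a) \<Rightarrow> bool" where
  "graphon_aut M W \<phi> \<longleftrightarrow> invertible_measure_preserving M \<phi> \<and>
     (\<forall>x\<in>space M. AE y in M. W (\<phi> x) (\<phi> y) = W x y)"

text \<open>Measurable bijection (read as: bimeasurable bijection of the space).\<close>
definition measurable_bijection :: "'a measure \<Rightarrow> ('a \<Rightarrow> 'a) \<Rightarrow> bool" where
  "measurable_bijection M \<phi> \<longleftrightarrow>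
     bij_betw \<phi> (space M) (space M) \<and> \<phi> \<in> M \<rightarrow>\<^sub>M M \<and>
     the_inv_into (space M) \<phi> \<in> M \<rightarrow>\<^sub>M M"

definition graphop_aut :: "'a measure \<Rightarrow> ('a \<Rightarrow> 'a measure) \<Rightarrow> ('a \<Rightarrow> 'a) \<Rightarrow> bool" where
  "graphop_aut M \<nu> \<phi> \<longleftrightarrow> measurable_bijection M \<phi> \<and>
     (\<forall>x\<in>space M. distr (\<nu> x) M \<phi> = \<nu> (\<phi> x))"

definition induced_sym :: "('a \<Rightarrow> 'a) \<Rightarrow> ('a \<Rightarrow> real) \<Rightarrow> ('a \<Rightarrow> real)" where
  "induced_sym \<phi> u = u \<circ> \<phi>"

definition L1_isometry :: "'a measure \<Rightarrow> (('a \<Rightarrow> real) \<Rightarrow> ('a \<Rightarrow> real)) \<Rightarrow> bool" where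
  "L1_isometry M T \<longleftrightarrow> (\<forall>u. integrable M u \<longrightarrow>
     integrable M (T u) \<and> (\<integral>x. \<bar>T u x\<bar> \<partial>M) = (\<integral>x. \<bar>u x\<bar> \<partial>M))"

end

theory Submission
  imports Defs
begin

lemma W_meas:
  assumes "graphon M W" "x \<in> space M"
  shows "W x \<in> borel_measurable M"
proof -
  have "(\<lambda>(x, y). W x y) \<in> borel_measurable (M \<Otimes>\<^sub>M M)" using assms unfolding graphon_def by auto
  from measurable_Pair2[OF this assms(2)] show ?thesis by simp
qed

lemma part1:
  assumes G: "graphon M W" and I: "invertible_measure_preserving M \<phi>" and x: "x \<in> space M"
    and ae: "AE y in M. W (\<phi> x) (\<phi> y) = W x y"
  shows "distr (graphop_of M W x) M \<phi> = graphop_of M W (\<phi> x)"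
proof -
  have phim[measurable]: "\<phi> \<in> M \<rightarrow>\<^sub>M M" and d: "distr M M \<phi> = M" and bij: "bij_betw \<phi> (space M) (space M)"
    using I unfolding invertible_measure_preserving_def by auto
  have px: "\<phi> x \<in> space M" using bij x by (auto dest: bij_betw_apply)
  have m1[measurable]: "W (\<phi> x) \<in> borel_measurable M" using W_meas[OF G px] .
  have m2[measurable]: "W x \<in> borel_measurable M" using W_meas[OF G x] .
  have "graphop_of M W (\<phi> x) = density (distr M M \<phi>) (\<lambda>y. ennreal (W (\<phi> x) y))"
    unfolding graphop_of_def d ..
  also have "\<dots> = distr (density M (\<lambda>y. ennreal (W (\<phi> x) (\<phi> y)))) M \<phi>"
    by (rule density_distr) auto
  also have "density M (\<lambda>y. ennreal (W (\<phi> x) (\<phi> y))) = density M (\<lambda>y. ennreal (W x y))"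
    by (rule density_cong) (use ae in auto)
  finally show ?thesis unfolding graphop_of_def by simp
qed

lemma distr_back:
  assumes B: "measurable_bijection M \<phi>"
  shows "distr (distr (density M f) M \<phi>) M (the_inv_into (space M) \<phi>) = density M f"
proof -
  have phim[measurable]: "\<phi> \<in> M \<rightarrow>\<^sub>M M" and psim[measurable]: "the_inv_into (space M) \<phi> \<in> M \<rightarrow>\<^sub>M M"
    and bij: "bij_betw \<phi> (space M) (space M)"
    using B unfolding measurable_bijection_def by auto
  have "distr (distr (density M f) M \<phi>) M (the_inv_into (space M) \<phi>)
      = distr (density M f) M (the_inv_into (space M) \<phi> \<circ> \<phi>)"
    by (rule distr_distr) auto
  also have "\<dots> = distr (density M f) (density M f) (\<lambda>y. y)"
    by (rule distr_cong) (use bij in \<open>auto simp: bij_betw_def the_inv_into_f_f\<close>)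
  also have "\<dots> = density M f" by simp
  finally show ?thesis .
qed

lemma part2:
  assumes G: "graphon M W" and B: "measurable_bijection M \<phi>" and d: "distr M M \<phi> = M"
    and x: "x \<in> space M"
    and eq: "distr (graphop_of M W x) M \<phi> = graphop_of M W (\<phi> x)"
  shows "AE y in M. W (\<phi> x) (\<phi> y) = W x y"
proof -
  have phim[measurable]: "\<phi> \<in> M \<rightarrow>\<^sub>M M" and bij: "bij_betw \<phi> (space M) (space M)"
    using B unfolding measurable_bijection_def by auto
  interpret prob_space M using G unfolding graphon_def by auto
  have px: "\<phi> x \<in> space M" using bij x by (auto dest: bij_betw_apply)
  have m1[measurable]: "W (\<phi> x) \<in> borel_measurable M" using W_meas[OF G px] .
  have m2[measurable]: "W x \<in> borel_measurable M" using W_meas[OF G x] .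
  have "graphop_of M W (\<phi> x) = density (distr M M \<phi>) (\<lambda>y. ennreal (W (\<phi> x) y))"
    unfolding graphop_of_def d ..
  also have "\<dots> = distr (density M (\<lambda>y. ennreal (W (\<phi> x) (\<phi> y)))) M \<phi>"
    by (rule density_distr) auto
  finally have "distr (density M (\<lambda>y. ennreal (W x y))) M \<phi> = distr (density M (\<lambda>y. ennreal (W (\<phi> x) (\<phi> y)))) M \<phi>"
    using eq unfolding graphop_of_def by simp
  hence "distr (distr (density M (\<lambda>y. ennreal (W x y))) M \<phi>) M (the_inv_into (space M) \<phi>)
     = distr (distr (density M (\<lambda>y. ennreal (W (\<phi> x) (\<phi> y)))) M \<phi>) M (the_inv_into (space M) \<phi>)"
    by simp
  hence "density M (\<lambda>y. ennreal (W x y)) = density M (\<lambda>y. ennreal (W (\<phi> x) (\<phi> y)))"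
    unfolding distr_back[OF B] .
  hence "AE y in M. ennreal (W x y) = ennreal (W (\<phi> x) (\<phi> y))"
    by (rule density_unique[rotated 2]) auto
  moreover have "AE y in M. y \<in> space M" by simp
  ultimately show ?thesis
  proof eventually_elim
    case (elim y)
    have "\<phi> y \<in> space M" using bij elim(2) by (auto dest: bij_betw_apply)
    then have "0 \<le> W x y" "0 \<le> W (\<phi> x) (\<phi> y)" using G x px elim(2) unfolding graphon_def by auto
    with elim(1) show ?case by simp
  qed
qed

lemma isom:
  assumes G: "graphon M W" and I: "invertible_measure_preserving M \<phi>"
  shows "L1_isometry M (induced_sym \<phi>)"
  unfolding L1_isometry_def induced_sym_def
proof (intro allI impI conjI)
  fix u :: "'a \<Rightarrow> real" assume u: "integrable M u"
  have phim[measurable]: "\<phi> \<in> M \<rightarrow>\<^sub>M M" and d: "distr M M \<phi> = M"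
    using I unfolding invertible_measure_preserving_def by auto
  have um[measurable]: "u \<in> borel_measurable M" using u by auto
  have "integrable (distr M M \<phi>) u" using u d by simp
  then show "integrable M (u \<circ> \<phi>)" using integrable_distr_eq[of \<phi> M M u] by (simp add: comp_def)
  have "(\<integral>x. \<bar>u x\<bar> \<partial>M) = (\<integral>x. \<bar>u x\<bar> \<partial>distr M M \<phi>)" using d by simp
  also have "\<dots> = (\<integral>x. \<bar>u (\<phi> x)\<bar> \<partial>M)" by (rule integral_distr) auto
  finally show "(\<integral>x. \<bar>(u \<circ> \<phi>) x\<bar> \<partial>M) = (\<integral>x. \<bar>u x\<bar> \<partial>M)" by (simp add: comp_def)
qed

lemma isom_pres:
  assumes G: "graphon M W" and B: "measurable_bijection M \<phi>" and L: "L1_isometry M (induced_sym \<phi>)"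
  shows "distr M M \<phi> = M"
proof -
  have phim[measurable]: "\<phi> \<in> M \<rightarrow>\<^sub>M M" using B unfolding measurable_bijection_def by auto
  interpret prob_space M using G unfolding graphon_def by auto
  interpret D: prob_space "distr M M \<phi>" by (rule prob_space_distr) auto
  show ?thesis
  proof (rule measure_eqI)
    show "sets (distr M M \<phi>) = sets M" by simp
    fix A assume "A \<in> sets (distr M M \<phi>)"
    hence A[measurable]: "A \<in> sets M" by simp
    have int: "integrable M (indicator A :: 'a \<Rightarrow> real)"
      by (rule integrable_real_indicator) (auto simp: emeasure_eq_measure)
    have "(\<integral>x. \<bar>indicator A (\<phi> x) :: real\<bar> \<partial>M) = (\<integral>x. \<bar>indicator A x :: real\<bar> \<partial>M)"
      using L int unfolding L1_isometry_def induced_sym_def by (auto simp: comp_def)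
    hence "(\<integral>x. (indicator A (\<phi> x) :: real) \<partial>M) = (\<integral>x. (indicator A x :: real) \<partial>M)" by simp
    moreover have "(\<integral>x. (indicator A (\<phi> x) :: real) \<partial>M) = (\<integral>x. (indicator A x :: real) \<partial>distr M M \<phi>)"
      by (rule integral_distr[symmetric]) auto
    ultimately have "measure (distr M M \<phi>) A = measure M A" by simp
    thus "emeasure (distr M M \<phi>) A = emeasure M A"
      by (simp add: D.emeasure_eq_measure emeasure_eq_measure)
  qed
qed

theorem lemma8p3:
  fixes M :: "'a measure" and W :: "'a \<Rightarrow> 'a \<Rightarrow> real"
  assumes "graphon M W"
  shows "(\<forall>\<phi>. graphon_aut M W \<phi> \<longrightarrow> graphop_aut M (graphop_of M W) \<phi>)
    \<and> (\<forall>\<phi>. graphop_aut M (graphop_of M W) \<phi> \<longrightarrow> (graphon_aut M W \<phi> \<longleftrightarrow> distr M M \<phi> = M))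
    \<and> {induced_sym \<phi> | \<phi>. graphon_aut M W \<phi>}
      = {induced_sym \<phi> | \<phi>. graphop_aut M (graphop_of M W) \<phi> \<and> L1_isometry M (induced_sym \<phi>)}"
proof -
  have P1: "graphop_aut M (graphop_of M W) \<phi>" if "graphon_aut M W \<phi>" for \<phi>
    using that part1[OF assms] unfolding graphon_aut_def graphop_aut_def measurable_bijection_def
      invertible_measure_preserving_def by auto
  have P2: "graphon_aut M W \<phi> \<longleftrightarrow> distr M M \<phi> = M" if "graphop_aut M (graphop_of M W) \<phi>" for \<phi>
    using that part2[OF assms] unfolding graphon_aut_def graphop_aut_def measurable_bijection_def
      invertible_measure_preserving_def by auto
  have P3: "{induced_sym \<phi> | \<phi>. graphon_aut M W \<phi>}
      = {induced_sym \<phi> | \<phi>. graphop_aut M (graphop_of M W) \<phi> \<and> L1_isometry M (induced_sym \<phi>)}"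
  proof (intro equalityI subsetI)
    fix f assume "f \<in> {induced_sym \<phi> | \<phi>. graphon_aut M W \<phi>}"
    then obtain \<phi> where f: "f = induced_sym \<phi>" and a: "graphon_aut M W \<phi>" by auto
    have "L1_isometry M (induced_sym \<phi>)"
      using isom[OF assms] a unfolding graphon_aut_def by auto
    with P1[OF a] f show "f \<in> {induced_sym \<phi> | \<phi>. graphop_aut M (graphop_of M W) \<phi> \<and> L1_isometry M (induced_sym \<phi>)}"
      by auto
  next
    fix f assume "f \<in> {induced_sym \<phi> | \<phi>. graphop_aut M (graphop_of M W) \<phi> \<and> L1_isometry M (induced_sym \<phi>)}"
    then obtain \<phi> where f: "f = induced_sym \<phi>" and a: "graphop_aut M (graphop_of M W) \<phi>"
      and L: "L1_isometry M (induced_sym \<phi>)" by auto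
    have "distr M M \<phi> = M" using isom_pres[OF assms _ L] a unfolding graphop_aut_def by auto
    with P2[OF a] f show "f \<in> {induced_sym \<phi> | \<phi>. graphon_aut M W \<phi>}" by auto
  qed
  show ?thesis using P1 P2 P3 by blast
qed

end
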